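(* Let $a, b, n$ be positive integers with $b>1$, $n>1$ and $\gcd(r_b(n),a)=1$, and let $S = S_a(b,n)$. Then $S$ satisfies Wilf's inequality: $\operatorname{F}(S) \le \operatorname{e}(S)\,\operatorname{n}(S) - 1$.
   Context: For $\ell \ge 1$, $r_b(\ell) = \sum_{j=0}^{\ell-1} b^j$, and $r_b(0)=0$. For $i \ge 1$, $a_i := r_b(n) + a\, r_b(i-1)$; $S_a(b,n)$ is the numerical semigroup generated by $\{a_i : i \ge 1\}$. For a numerical semigroup $S$: $\operatorname{F}(S)$ is the largest integer not in $S$; $\operatorname{e}(S)$ is the embedding dimension (cardinality of the minimal generating set); $\operatorname{n}(S)$ is the cardinality of $\{s \in S : s < \operatorname{F}(S)\}$. *)

theory Defs
  imports Main
begin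

definition rb :: "nat \<Rightarrow> nat \<Rightarrow> nat" where
  "rb b l = (\<Sum>j<l. b ^ j)"

inductive_set gen_monoid :: "nat set \<Rightarrow> nat set" for A :: "nat set" where
  zero: "0 \<in> gen_monoid A"
| gen: "x \<in> A \<Longrightarrow> x \<in> gen_monoid A"
| add: "x \<in> gen_monoid A \<Longrightarrow> y \<in> gen_monoid A \<Longrightarrow> x + y \<in> gen_monoid A"

definition gen_a :: "nat \<Rightarrow> nat \<Rightarrow> nat \<Rightarrow> nat \<Rightarrow> nat" where
  "gen_a a b n i = rb b n + a * rb b (i - 1)"

definition S_abn :: "nat \<Rightarrow> nat \<Rightarrow> nat \<Rightarrow> nat set" where
  "S_abn a b n = gen_monoid (gen_a a b n ` {1..})"

definition frob :: "nat set \<Rightarrow> int" where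
  "frob S = (if UNIV - S = {} then -1 else int (Max (UNIV - S)))"

definition emb_dim :: "nat set \<Rightarrow> nat" where
  "emb_dim S = card (THE A. gen_monoid A = S \<and> (\<forall>B. B \<subset> A \<longrightarrow> gen_monoid B \<noteq> S))"

definition n_small :: "nat set \<Rightarrow> nat" where
  "n_small S = card {s \<in> S. int s < frob S}"

end

theory Submission
  imports Defs
begin


lemma rb_0[simp]: "rb b 0 = 0" by (simp add: rb_def)

lemma rb_Suc: "rb b (Suc l) = rb b l + b ^ l"
  by (simp add: rb_def)

lemma rb_mul: "(b - 1) * rb b l + 1 = b ^ l" if "b \<ge> 1"
proof (induction l)
  case 0 then show ?case by (simp add: rb_def)
next
  case (Suc l)
  have "(b - 1) * rb b (Suc l) + 1 = ((b - 1) * rb b l + 1) + (b-1) * b^l"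
    by (simp add: rb_Suc algebra_simps)
  also have "\<dots> = b^l + (b-1)*b^l" using Suc by simp
  also have "\<dots> = b ^ Suc l" using that by (cases b) (auto simp: algebra_simps)
  finally show ?case .
qed

lemma rb_mono: "b > 1 \<Longrightarrow> l < m \<Longrightarrow> rb b l < rb b m"
proof (induction m)
  case 0 then show ?case by simp
next
  case (Suc m)
  have "rb b m < rb b (Suc m)" using Suc.prems by (simp add: rb_Suc)
  then show ?case using Suc by (cases "l = m") auto
qed

lemma rb_add: "rb b (l + m) = rb b l + b ^ l * rb b m"
  by (induction m) (auto simp: rb_Suc algebra_simps power_add)

function ds :: "nat \<Rightarrow> nat \<Rightarrow> nat" where
  "ds b N = (if b < 2 \<or> N = 0 then 0 else N mod b + ds b (N div b))"
  by auto
termination by (relation "measure snd") auto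

declare ds.simps[simp del]

lemma ds_le: "ds b x \<le> x"
proof (induction x rule: less_induct)
  case (less x)
  show ?case
  proof (cases "b < 2 \<or> x = 0")
    case True then show ?thesis by (simp add: ds.simps)
  next
    case False
    then have "x div b < x" by auto
    then have "ds b (x div b) \<le> x div b" using less by blast
    moreover have "x div b \<le> x div b * b" using False by simp
    moreover have "x div b * b + x mod b = x" by (rule div_mult_mod_eq)
    ultimately have "x mod b + ds b (x div b) \<le> x" by linarith
    then show ?thesis using False by (subst ds.simps) simp
  qed
qed



lemma ds_step: "b \<ge> 2 \<Longrightarrow> ds b N = N mod b + ds b (N div b)"
  by (cases "N = 0") (simp_all add: ds.simps)

lemma ds_0[simp]: "ds b 0 = 0" by (simp add: ds.simps)

lemma ds_small: "b \<ge> 2 \<Longrightarrow> c < b \<Longrightarrow> ds b c = c"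
  by (simp add: ds_step)

lemma ds_add: assumes "b \<ge> 2" shows "ds b (x + y) \<le> ds b x + ds b y"
proof -
  have "\<forall>x y. x + y = s \<longrightarrow> ds b (x + y) \<le> ds b x + ds b y" for s
  proof (induction s rule: less_induct)
    case (less s)
    show ?case
    proof (intro allI impI)
      fix x y assume xy: "x + y = s"
      show "ds b (x + y) \<le> ds b x + ds b y"
      proof (cases "s = 0")
        case True then show ?thesis using xy by simp
      next
        case False
        define c where "c = (x mod b + y mod b) div b"
        have "x mod b < b" "y mod b < b" using assms by simp_all
        then have "x mod b + y mod b < b * 2" by linarith
        then have c1: "c \<le> 1" unfolding c_def using assms
          by (simp add: div_less_iff_less_mult less_Suc_eq_le[symmetric])
        have hd: "(x + y) div b = x div b + y div b + c" unfolding c_def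
          by (rule div_add1_eq)
        have hm: "(x + y) mod b + c * b = x mod b + y mod b"
        proof -
          have "(x+y) mod b = (x mod b + y mod b) mod b" by (simp add: mod_add_eq)
          moreover have "(x mod b + y mod b) div b * b + (x mod b + y mod b) mod b = x mod b + y mod b"
            by (rule div_mult_mod_eq)
          ultimately show ?thesis unfolding c_def by linarith
        qed
        have lt: "(x + y) div b < s" using False xy assms by simp
        have "ds b ((x+y) div b) \<le> ds b (x div b) + ds b (y div b + c)"
          using less.IH lt hd by (metis add.assoc)
        also have "ds b (y div b + c) \<le> ds b (y div b) + ds b c"
        proof -
          have "y div b + c \<le> (x+y) div b" using hd by simp
          then have "y div b + c < s" using lt by simp
          then show ?thesis using less.IH by blast
        qed
        also have "ds b c \<le> c" by (rule ds_le)
        finally have fin: "ds b ((x+y) div b) \<le> ds b (x div b) + ds b (y div b) + c" by simp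
        then have "ds b (x + y) \<le> x mod b + y mod b + ds b (x div b) + ds b (y div b)"
        proof -
          have "c \<le> c * b" using assms by simp
          then show ?thesis using ds_step[OF assms, of "x+y"] hm fin by linarith
        qed
        then show ?thesis using ds_step[OF assms, of x] ds_step[OF assms, of y] by simp
      qed
    qed
  qed
  then show ?thesis by blast
qed



lemma ds_concat: assumes "b \<ge> 2" shows "t < b ^ k \<Longrightarrow> ds b (q * b ^ k + t) = ds b q + ds b t"
proof (induction k arbitrary: t)
  case 0 then show ?case by simp
next
  case (Suc k)
  have bk: "t div b < b ^ k" using Suc.prems assms
    by (simp add: div_less_iff_less_mult mult.commute)
  have m: "(q * b ^ Suc k + t) mod b = t mod b"
    by (simp add: mod_add_left_eq[symmetric])
  have d: "(q * b ^ Suc k + t) div b = q * b ^ k + t div b"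
    using assms by (simp add: div_add1_eq[of "q * b ^ Suc k" t b] mult.commute mult.left_commute)
  have "ds b (q * b ^ Suc k + t) = t mod b + ds b (q * b ^ k + t div b)"
    using ds_step[OF assms] m d by metis
  also have "\<dots> = t mod b + ds b q + ds b (t div b)" using Suc.IH[OF bk] by simp
  also have "\<dots> = ds b q + ds b t" using ds_step[OF assms, of t] by simp
  finally show ?case .
qed

lemma ds_pow: "b \<ge> 2 \<Longrightarrow> ds b (b ^ k) = 1"
  using ds_concat[of b 0 k 1] by (simp add: ds_small)

lemma ds_pm1: assumes "b \<ge> 2" shows "ds b (b ^ k - 1) = k * (b - 1)"
proof (induction k)
  case 0 then show ?case by simp
next
  case (Suc k)
  have pos: "b ^ k \<ge> 1" using assms by simp
  have "b ^ Suc k - 1 = (b - 1) * b ^ k + (b ^ k - 1)" using pos assms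
    by (simp add: algebra_simps diff_mult_distrib)
  moreover have "b ^ k - 1 < b ^ k" using pos by simp
  ultimately have "ds b (b ^ Suc k - 1) = ds b (b - 1) + ds b (b ^ k - 1)"
    using ds_concat[OF assms] by metis
  then show ?case using Suc assms by (simp add: ds_small)
qed

lemma ds_fold: assumes "b \<ge> 2" and "n \<ge> 1"
  shows "M \<ge> 1 \<Longrightarrow> 1 \<le> N \<Longrightarrow> N \<le> b ^ n - 1 \<Longrightarrow> M mod (b ^ n - 1) = N mod (b ^ n - 1)
    \<Longrightarrow> ds b N \<le> ds b M"
proof (induction M rule: less_induct)
  case (less M)
  define B where "B = b ^ n - 1"
  have "b ^ n \<ge> b ^ 1" using assms by (intro power_increasing) auto
  then have bn: "b ^ n \<ge> 2" using assms by simp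
  show ?case
  proof (cases "M \<le> B")
    case True
    have NB: "N \<le> B" "N mod B = M mod B" using less.prems B_def by auto
    have "M = N"
    proof (cases "M < B")
      case True
      then show ?thesis using NB less.prems
        by (cases "N < B") (auto simp: mod_less)
    next
      case False
      then have "M = B" using \<open>M \<le> B\<close> by simp
      then have "N mod B = 0" using NB by simp
      then show ?thesis using NB \<open>M = B\<close> less.prems
        by (cases "N < B") (auto simp: mod_less)
    qed
    then show ?thesis by simp
  next
    case False
    define q where "q = M div b ^ n"
    define t where "t = M mod b ^ n"
    have Mqt: "M = q * b ^ n + t" unfolding q_def t_def by (metis div_mult_mod_eq)
    have tlt: "t < b ^ n" unfolding t_def using bn by (intro mod_less_divisor) linarith
    have "M \<ge> b ^ n" using False B_def bn by linarith
    then have q1: "q \<ge> 1" unfolding q_def using bn assms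
      by (simp add: Suc_le_eq div_greater_zero_iff)
    have "q * 2 \<le> q * b ^ n" using bn by simp
    then have lt: "q + t < M" using Mqt q1 by simp
    have qB: "q * B = q * b ^ n - q" by (simp add: B_def diff_mult_distrib2)
    have "q \<le> q * b ^ n" using bn by simp
    then have eqm: "M = (q + t) + q * B" using qB Mqt by linarith
    have "(q + t) mod B = M mod B" using eqm by simp
    then have "ds b N \<le> ds b (q + t)" using less.IH[OF lt] less.prems q1 B_def by simp
    also have "\<dots> \<le> ds b q + ds b t" by (rule ds_add[OF assms(1)])
    also have "\<dots> = ds b M" using ds_concat[OF assms(1) tlt] Mqt by simp
    finally show ?thesis .
  qed
qed



lemma gm_mult: "x \<in> gen_monoid A \<Longrightarrow> k * x \<in> gen_monoid A"
  by (induction k) (auto intro: gen_monoid.intros)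

lemma gm_sub0: "x \<in> gen_monoid A \<Longrightarrow> A \<subseteq> gen_monoid B \<Longrightarrow> x \<in> gen_monoid B"
  by (induction rule: gen_monoid.induct) (auto intro: gen_monoid.intros)

lemma gm_sub: "A \<subseteq> gen_monoid B \<Longrightarrow> gen_monoid A \<subseteq> gen_monoid B"
  using gm_sub0 by blast

lemma S_inv:
  assumes b2: "b \<ge> 2" and y: "y \<in> S_abn a b n"
  shows "\<exists>W X. y = W * rb b n + a * X \<and> ds b ((b - 1) * X + W) \<le> W \<and> (W = 0 \<longrightarrow> y = 0)"
  using y unfolding S_abn_def
proof (induction rule: gen_monoid.induct)
  case zero then show ?case by (intro exI[of _ 0]) simp
next
  case (gen x)
  then obtain i where x: "x = rb b n + a * rb b (i - 1)" by (auto simp: gen_a_def)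
  have "(b - 1) * rb b (i - 1) + 1 = b ^ (i - 1)" using b2 by (intro rb_mul) simp
  then have "ds b ((b - 1) * rb b (i - 1) + 1) \<le> 1" using ds_pow[OF b2] by simp
  then show ?case using x by (intro exI[of _ 1] exI[of _ "rb b (i - 1)"]) simp
next
  case (add x y)
  then obtain W1 X1 W2 X2 where h: "x = W1 * rb b n + a * X1" "ds b ((b - 1) * X1 + W1) \<le> W1"
    "W1 = 0 \<longrightarrow> x = 0" "y = W2 * rb b n + a * X2" "ds b ((b - 1) * X2 + W2) \<le> W2"
    "W2 = 0 \<longrightarrow> y = 0" by blast
  have eq: "(b - 1) * (X1 + X2) + (W1 + W2) = ((b - 1) * X1 + W1) + ((b - 1) * X2 + W2)"
    by (simp add: add_mult_distrib2)
  have "ds b ((b - 1) * (X1 + X2) + (W1 + W2)) \<le> ds b ((b - 1) * X1 + W1) + ds b ((b - 1) * X2 + W2)"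
    unfolding eq by (rule ds_add[OF b2])
  then show ?case using h
    by (intro exI[of _ "W1 + W2"] exI[of _ "X1 + X2"]) (auto simp: algebra_simps)
qed

lemma rb_ge: "b \<ge> 2 \<Longrightarrow> rb b n \<ge> 2 * n - 1"
proof (induction n)
  case 0 then show ?case by simp
next
  case (Suc n)
  have "b ^ n \<ge> 1" using Suc.prems by simp
  moreover have "n \<ge> 1 \<Longrightarrow> b ^ n \<ge> 2" using Suc.prems
    by (metis power_one_right power_increasing le_trans one_le_numeral)
  ultimately show ?case using Suc by (cases n) (auto simp: rb_Suc)
qed

lemma gap:
  assumes a: "a > 0" and b2: "b \<ge> 2" and n2: "n \<ge> 2" and cop: "gcd (rb b n) a = 1"
  shows "(b - 1) * (n - 1) * rb b n + a * (rb b n - n + 1) \<notin> S_abn a b n"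
proof
  define r where "r = rb b n"
  define X0 where "X0 = r - n + 1"
  have rge: "r \<ge> 2 * n - 1" unfolding r_def using rb_ge[OF b2] .
  have X0r: "X0 < r" "X0 \<ge> 1" unfolding X0_def using rge n2 by auto
  have copr: "coprime r a" using cop unfolding r_def by (simp add: coprime_iff_gcd_eq_1)
  assume "(b - 1) * (n - 1) * rb b n + a * (rb b n - n + 1) \<in> S_abn a b n"
  then obtain W X where e: "(b - 1) * (n - 1) * r + a * X0 = W * r + a * X"
    and dsV: "ds b ((b - 1) * X + W) \<le> W"
    using S_inv[OF b2] unfolding r_def X0_def by metis
  define c where "c = (b - 1) * (n - 1)"
  have e': "c * r + a * X0 = W * r + a * X" using e c_def by simp
  show False
  proof (cases "X < X0")
    case True
    then have "a * X < a * X0" using a by simp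
    then have "c * r < W * r" using e' by linarith
    then have "c \<le> W" by simp
    then have "c * r \<le> W * r" by simp
    then have "a * (X0 - X) = (W - c) * r" using e' \<open>a * X < a * X0\<close>
      by (simp add: diff_mult_distrib diff_mult_distrib2)
    then have "r dvd a * (X0 - X)" by simp
    then have "r dvd X0 - X" using copr by (simp add: coprime_dvd_mult_right_iff)
    moreover have "0 < X0 - X" "X0 - X < r" using True X0r by auto
    ultimately show False using nat_dvd_not_less by blast
  next
    case False
    then have "a * X0 \<le> a * X" by simp
    then have "W * r \<le> c * r" using e' by linarith
    then have "W \<le> c" by (cases "r = 0") (use X0r in auto)
    then have eq2: "a * (X - X0) = ((b - 1) * (n - 1) - W) * r" using e' \<open>a * X0 \<le> a * X\<close> \<open>W * r \<le> c * r\<close>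
      unfolding c_def[symmetric] by (simp add: diff_mult_distrib diff_mult_distrib2)
    have Wle: "W \<le> (b - 1) * (n - 1)" using \<open>W \<le> c\<close> c_def by simp
    have "r dvd a * (X - X0)" using eq2 by simp
    then have "r dvd X - X0" using copr by (simp add: coprime_dvd_mult_right_iff)
    then obtain k where "X - X0 = r * k" by (auto simp: dvd_def)
    then have k: "X = X0 + r * k" using False by simp
    define B where "B = b ^ n - 1"
    define D where "D = (b - 1) * (n - 1) - W"
    have Bdef: "B = (b - 1) * r" unfolding B_def r_def using rb_mul[of b n] b2 by simp
    have "n - 1 < r" using rge n2 by simp
    then have cB0: "(b - 1) * (n - 1) < (b - 1) * r" using b2 by simp
    moreover have "D \<le> (b - 1) * (n - 1)" unfolding D_def by simp
    ultimately have Bpos: "D < B" unfolding Bdef by linarith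
    have V: "(b - 1) * X + W = (B - D) + B * k"
    proof -
      have "X0 = r - (n - 1)" unfolding X0_def using rge n2 by simp
      then have "(b - 1) * X0 = B - (b - 1) * (n - 1)" unfolding Bdef
        by (simp only: diff_mult_distrib2)
      moreover have "(b - 1) * (n - 1) \<le> B" using cB0 Bdef by simp
      moreover have "(b - 1) * X = (b - 1) * X0 + B * k" unfolding k Bdef
        by (simp only: add_mult_distrib2 mult.assoc)
      ultimately show ?thesis unfolding D_def using Wle c_def by linarith
    qed
    have N1: "B - D \<ge> 1" "B - D \<le> b ^ n - 1" using Bpos B_def by auto
    have m1: "(b - 1) * X + W \<ge> 1" using V N1 by linarith
    have mm: "((b - 1) * X + W) mod B = (B - D) mod B" unfolding V by simp
    have n1: "n \<ge> 1" using n2 by simp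
    have "ds b (B - D) \<le> ds b ((b - 1) * X + W)"
      using ds_fold[OF b2 n1 m1 N1(1) N1(2)] mm unfolding B_def by simp
    then have dN: "ds b (B - D) \<le> W" using dsV by simp
    have "ds b B \<le> ds b (B - D) + ds b D" using ds_add[OF b2, of "B - D" D] Bpos by simp
    also have "ds b D \<le> D" by (rule ds_le)
    finally have "n * (b - 1) \<le> W + D" using dN ds_pm1[OF b2, of n] B_def by simp
    also have "W + D = (b - 1) * (n - 1)" using Wle D_def by simp
    finally show False using b2 n2 by simp
  qed
qed



lemma gm_decomp: "x \<in> gen_monoid A \<Longrightarrow>
  x = 0 \<or> x \<in> A \<or> (\<exists>y z. y \<in> gen_monoid A \<and> z \<in> gen_monoid A \<and> y \<noteq> 0 \<and> z \<noteq> 0 \<and> x = y + z)"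
proof (induction rule: gen_monoid.induct)
  case (add x y)
  then show ?case
    by (cases "x = 0"; cases "y = 0") (auto intro: gen_monoid.intros)
qed auto

lemma gen_a_big:
  assumes b1: "b \<ge> 1"
  shows "gen_a a b n (n + 1 + k) = gen_a a b n (k + 1) + (a + a * (b - 1) * rb b k) * gen_a a b n 1"
proof -
  have "rb b (n + k) = rb b n + b ^ n * rb b k" by (rule rb_add)
  moreover have "b ^ n = (b - 1) * rb b n + 1" using rb_mul[OF b1, of n] by simp
  ultimately have "rb b (n + k) = rb b n + (b - 1) * rb b n * rb b k + rb b k"
    by (simp add: algebra_simps)
  then show ?thesis unfolding gen_a_def by (simp add: algebra_simps)
qed

lemma all_in_M:
  assumes b1: "b \<ge> 1" and n1: "n \<ge> 1"
  shows "i \<ge> 1 \<Longrightarrow> gen_a a b n i \<in> gen_monoid (gen_a a b n ` {1..n})"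
proof (induction i rule: less_induct)
  case (less i)
  show ?case
  proof (cases "i \<le> n")
    case True then show ?thesis using less.prems by (auto intro: gen_monoid.gen)
  next
    case False
    define k where "k = i - n - 1"
    have i: "i = n + 1 + k" using False k_def by simp
    have "gen_a a b n (k + 1) \<in> gen_monoid (gen_a a b n ` {1..n})"
      using less.IH[of "k + 1"] i n1 by simp
    moreover have "gen_a a b n 1 \<in> gen_monoid (gen_a a b n ` {1..n})"
      using n1 by (auto intro: gen_monoid.gen)
    ultimately show ?thesis unfolding i gen_a_big[OF b1]
      by (intro gen_monoid.add gm_mult)
  qed
qed

lemma S_eq_M:
  assumes "b \<ge> 1" "n \<ge> 1"
  shows "S_abn a b n = gen_monoid (gen_a a b n ` {1..n})"
proof
  show "S_abn a b n \<subseteq> gen_monoid (gen_a a b n ` {1..n})"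
    unfolding S_abn_def using all_in_M[OF assms] by (intro gm_sub) auto
  show "gen_monoid (gen_a a b n ` {1..n}) \<subseteq> S_abn a b n"
    unfolding S_abn_def by (intro gm_sub) (auto intro: gen_monoid.gen)
qed

lemma irred:
  assumes a: "a > 0" and b2: "b \<ge> 2" and cop: "gcd (rb b n) a = 1"
    and i: "1 \<le> i" "i \<le> n"
    and y: "y \<in> S_abn a b n" "y \<noteq> 0" and z: "z \<in> S_abn a b n" "z \<noteq> 0"
  shows "gen_a a b n i \<noteq> y + z"
proof
  assume eq: "gen_a a b n i = y + z"
  define r where "r = rb b n"
  obtain W1 X1 where h1: "y = W1 * r + a * X1" "W1 \<ge> 1"
    using S_inv[OF b2 y(1)] y(2) unfolding r_def by (metis less_one not_less)
  obtain W2 X2 where h2: "z = W2 * r + a * X2" "W2 \<ge> 1"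
    using S_inv[OF b2 z(1)] z(2) unfolding r_def by (metis less_one not_less)
  define R where "R = rb b (i - 1)"
  have Rr: "R < r" unfolding R_def r_def using i b2 by (intro rb_mono) auto
  have e: "r + a * R = (W1 + W2) * r + a * (X1 + X2)" using eq h1 h2
    unfolding gen_a_def r_def R_def by (simp add: algebra_simps)
  define W where "W = W1 + W2 - 1"
  have W1: "W \<ge> 1" using h1 h2 W_def by simp
  have "W + 1 = W1 + W2" using W_def h1 h2 by simp
  then have "(W1 + W2) * r = W * r + r" by (metis add_mult_distrib mult_1)
  then have e2: "a * R = W * r + a * (X1 + X2)" using e by linarith
  have r0: "r > 0" using rb_mono[of b 0 n] b2 i unfolding r_def by simp
  then have "W * r > 0" using W1 by simp
  then have "a * (X1 + X2) < a * R" using e2 by linarith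
  then have lt: "X1 + X2 < R" by simp
  have "a * (R - (X1 + X2)) = W * r" using e2 by (simp add: diff_mult_distrib2)
  then have "r dvd a * (R - (X1 + X2))" by simp
  moreover have "coprime r a" using cop unfolding r_def by (simp add: coprime_iff_gcd_eq_1)
  ultimately have "r dvd R - (X1 + X2)" by (simp add: coprime_dvd_mult_right_iff)
  then have "r \<le> R - (X1 + X2)" using lt by (simp add: dvd_imp_le)
  then show False using Rr by simp
qed

lemma emb_dim_eq:
  assumes a: "a > 0" and b2: "b \<ge> 2" and n1: "n \<ge> 1" and cop: "gcd (rb b n) a = 1"
  shows "emb_dim (S_abn a b n) = n"
proof -
  define M where "M = gen_a a b n ` {1..n}"
  define S where "S = S_abn a b n"
  have SM: "gen_monoid M = S" unfolding M_def S_def using S_eq_M[of b n a] b2 n1 by simp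
  have pos: "x \<in> M \<Longrightarrow> x \<noteq> 0" for x
    unfolding M_def gen_a_def using rb_mono[of b 0 n] b2 n1 by auto
  have key: "x \<in> M \<Longrightarrow> gen_monoid A = S \<Longrightarrow> x \<in> A" for x A
  proof -
    assume x: "x \<in> M" and A: "gen_monoid A = S"
    then obtain i where i: "i \<in> {1..n}" "x = gen_a a b n i" unfolding M_def by auto
    have "x \<in> gen_monoid M" using x by (rule gen_monoid.gen)
    then have "x \<in> gen_monoid A" using A SM by simp
    from gm_decomp[OF this] show "x \<in> A"
    proof (elim disjE exE conjE)
      show "x = 0 \<Longrightarrow> x \<in> A" using pos[OF x] by simp
      show "x \<in> A \<Longrightarrow> x \<in> A" .
      fix y z assume yz: "y \<in> gen_monoid A" "z \<in> gen_monoid A" "y \<noteq> 0" "z \<noteq> 0" "x = y + z"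
      have "gen_a a b n i \<noteq> y + z"
        using irred[OF a b2 cop, of i y z] i(1) yz A unfolding S_def by auto
      then show "x \<in> A" using yz i by simp
    qed
  qed
  have PM: "gen_monoid M = S \<and> (\<forall>B. B \<subset> M \<longrightarrow> gen_monoid B \<noteq> S)"
  proof (intro conjI allI impI SM notI)
    fix B assume "B \<subset> M" "gen_monoid B = S"
    then have "M \<subseteq> B" using key[of _ B] by blast
    then show False using \<open>B \<subset> M\<close> by auto
  qed
  have uniq: "A = M" if "gen_monoid A = S \<and> (\<forall>B. B \<subset> A \<longrightarrow> gen_monoid B \<noteq> S)" for A
  proof -
    have "M \<subseteq> A" using key[of _ A] that by blast
    show ?thesis
    proof (rule ccontr)
      assume "A \<noteq> M"
      then have "M \<subset> A" using \<open>M \<subseteq> A\<close> by auto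
      then show False using that SM by auto
    qed
  qed
  have TH: "(THE A. gen_monoid A = S \<and> (\<forall>B. B \<subset> A \<longrightarrow> gen_monoid B \<noteq> S)) = M"
    by (rule the_equality, rule PM, rule uniq)
  have CM: "card M = n"
  proof -
    have "inj_on (gen_a a b n) {1..n}"
    proof (rule inj_onI)
      fix i j assume ij: "i \<in> {1..n}" "j \<in> {1..n}" "gen_a a b n i = gen_a a b n j"
      then have "rb b (i - 1) = rb b (j - 1)" using a unfolding gen_a_def by simp
      then have "i - 1 = j - 1" using rb_mono[of b "i - 1" "j - 1"] rb_mono[of b "j - 1" "i - 1"] b2
        by (cases "i - 1 < j - 1"; cases "j - 1 < i - 1") auto
      then show "i = j" using ij by auto
    qed
    then show ?thesis unfolding M_def by (simp add: card_image)
  qed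
  show ?thesis unfolding emb_dim_def S_def[symmetric] TH CM ..
qed



fun dc :: "nat \<Rightarrow> nat \<Rightarrow> nat \<Rightarrow> nat" where
  "dc b 0 X = 0"
| "dc b (Suc m) X = X div rb b (Suc m) + dc b m (X mod rb b (Suc m))"

lemma rb_1[simp]: "rb b 1 = 1" "rb b (Suc 0) = 1" by (simp_all add: rb_def)

lemma dc_mem: "m \<ge> 1 \<or> X = 0 \<Longrightarrow> dc b m X * rb b n + a * X \<in> S_abn a b n"
proof (induction m arbitrary: X)
  case 0 then show ?case by (simp add: S_abn_def gen_monoid.zero)
next
  case (Suc m)
  define R where "R = rb b (Suc m)"
  define q where "q = X div R"
  define Y where "Y = X mod R"
  have X: "X = q * R + Y" unfolding q_def Y_def by simp
  have "m \<ge> 1 \<or> Y = 0" using Y_def R_def by (cases m) auto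
  then have IH: "dc b m Y * rb b n + a * Y \<in> S_abn a b n" using Suc.IH by blast
  have g: "gen_a a b n (Suc m + 1) \<in> S_abn a b n" unfolding S_abn_def by (auto intro: gen_monoid.gen)
  have "gen_a a b n (Suc m + 1) = rb b n + a * R" unfolding gen_a_def R_def by simp
  then have "q * (rb b n + a * R) \<in> S_abn a b n" using g gm_mult unfolding S_abn_def by metis
  then have mem: "q * (rb b n + a * R) + (dc b m Y * rb b n + a * Y) \<in> S_abn a b n"
    using IH unfolding S_abn_def by (rule gen_monoid.add)
  have dcX: "dc b (Suc m) X = q + dc b m Y" unfolding q_def Y_def R_def by simp
  moreover have "dc b (Suc m) X * rb b n + a * X = q * (rb b n + a * R) + (dc b m Y * rb b n + a * Y)"
    unfolding dcX by (subst X) (simp add: algebra_simps)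
  ultimately show ?case using mem by simp
qed

lemma dc_0[simp]: "dc b m 0 = 0" by (induction m) auto

lemma sum_gauss2: "2 * (\<Sum>q<k. q) = k * (k - 1::nat)"
  by (induction k) (auto simp: algebra_simps)

lemma sum_block: "(\<Sum>X<k * R. (f::nat\<Rightarrow>nat) X) = (\<Sum>q<k. \<Sum>Y<R. f (q * R + Y))"
proof -
  have "(\<Sum>X<k * R. f X) = (\<Sum>q<k. sum f {q * R..<q * R + R})"
    by (rule sum.nat_group[symmetric])
  also have "\<dots> = (\<Sum>q<k. \<Sum>Y<R. f (q * R + Y))"
  proof (rule sum.cong[OF refl])
    fix q
    show "sum f {q * R..<q * R + R} = (\<Sum>Y<R. f (q * R + Y))"
      using sum.shift_bounds_nat_ivl[of f 0 "q*R" R] by (simp add: lessThan_atLeast0 ac_simps)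
  qed
  finally show ?thesis .
qed

lemma dc_sum: assumes b2: "b \<ge> 2"
  shows "2 * (\<Sum>X<rb b (Suc m). dc b m X) = m * b ^ Suc m + rb b (Suc m) - 1"
proof (induction m)
  case 0 then show ?case by simp
next
  case (Suc m)
  define R where "R = rb b (Suc m)"
  define T where "T = (\<Sum>X<R. dc b m X)"
  have R2: "rb b (Suc (Suc m)) = b * R + 1" unfolding R_def
    using rb_add[of b 1 "Suc m"] by simp
  have Rpos: "R > 0" unfolding R_def using rb_mono[of b 0 "Suc m"] b2 by simp
  have "(\<Sum>X<rb b (Suc (Suc m)). dc b (Suc m) X) = (\<Sum>X<b * R. dc b (Suc m) X) + dc b (Suc m) (b * R)"
    unfolding R2 by simp
  also have "dc b (Suc m) (b * R) = b" using Rpos by (simp add: R_def[symmetric])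
  also have "(\<Sum>X<b * R. dc b (Suc m) X) = (\<Sum>q<b. \<Sum>Y<R. dc b (Suc m) (q * R + Y))"
    by (rule sum_block)
  also have "\<dots> = (\<Sum>q<b. \<Sum>Y<R. q + dc b m Y)"
  proof (intro sum.cong refl)
    fix q Y assume "Y \<in> {..<R}"
    then have "(q * R + Y) div R = q" "(q * R + Y) mod R = Y" using Rpos by auto
    then show "dc b (Suc m) (q * R + Y) = q + dc b m Y" by (simp add: R_def[symmetric])
  qed
  also have "\<dots> = (\<Sum>q<b. R * q + T)" by (simp add: sum.distrib T_def)
  also have "\<dots> = R * (\<Sum>q<b. q) + b * T" by (simp add: sum.distrib sum_distrib_left)
  finally have eq: "(\<Sum>X<rb b (Suc (Suc m)). dc b (Suc m) X) = R * (\<Sum>q<b. q) + b * T + b" .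
  have IH: "2 * T = m * b ^ Suc m + R - 1" using Suc.IH unfolding T_def R_def .
  have bm: "(b - 1) * R + 1 = b ^ Suc m" unfolding R_def using rb_mul[of b "Suc m"] b2 by simp
  have "2 * (\<Sum>X<rb b (Suc (Suc m)). dc b (Suc m) X) = R * (b * (b - 1)) + b * (2 * T) + 2 * b"
    unfolding eq using sum_gauss2[of b] by (simp add: algebra_simps)
  also have "\<dots> = R * (b * (b - 1)) + b * (m * b ^ Suc m + R - 1) + 2 * b" using IH by simp
  also have "\<dots> = Suc m * b ^ Suc (Suc m) + rb b (Suc (Suc m)) - 1"
  proof -
    obtain p where p: "b = p + 1" using b2 by (metis add.commute le_add_diff_inverse le_trans one_le_numeral)
    obtain R' where R': "R = R' + 1" using Rpos by (metis Suc_eq_plus1 less_imp_Suc_add)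
    have bm': "p * R + 1 = b ^ Suc m" using bm p by simp
    have e1: "m * b ^ Suc m + R - 1 = m * b ^ Suc m + R'" using R' by simp
    have "R * (b * (b - 1)) + b * (m * b ^ Suc m + R - 1) + 2 * b
        = R * (b * p) + b * m * b ^ Suc m + b * R + b" unfolding e1 using p R' by (simp add: algebra_simps)
    also have "\<dots> = b * (p * R + 1) + b * m * b ^ Suc m + b * R" by (simp add: algebra_simps)
    also have "\<dots> = Suc m * b ^ Suc (Suc m) + (b * R + 1) - 1" unfolding bm' by (simp add: algebra_simps)
    finally show ?thesis unfolding R2 .
  qed
  finally show ?case .
qed



lemma gap_count:
  fixes S :: "nat set" and r :: nat and e :: "nat \<Rightarrow> nat"
  assumes r0: "r > 0" and closed: "\<And>x. x \<in> S \<Longrightarrow> x + r \<in> S" and eS: "\<And>X. X < r \<Longrightarrow> e X \<in> S"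
    and surj: "\<And>t. t < r \<Longrightarrow> \<exists>X<r. e X mod r = t"
  shows "finite (UNIV - S) \<and> card (UNIV - S) \<le> (\<Sum>X<r. e X div r)"
proof -
  define C where "C X = (\<lambda>k. e X mod r + k * r) ` {..< e X div r}" for X
  have cl: "x \<in> S \<Longrightarrow> x + j * r \<in> S" for x j
  proof (induction j)
    case (Suc j)
    then have "x + j * r + r \<in> S" using closed by blast
    then show ?case by (simp add: algebra_simps)
  qed simp
  have sub: "UNIV - S \<subseteq> (\<Union>X<r. C X)"
  proof
    fix y assume y: "y \<in> UNIV - S"
    obtain X where X: "X < r" "e X mod r = y mod r" using surj[of "y mod r"] r0 by auto
    have "\<not> e X \<le> y"
    proof
      assume le: "e X \<le> y"
      then have "r dvd y - e X" using X(2) mod_eq_dvd_iff_nat[OF le, of r] by simp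
      then obtain j where "y - e X = r * j" by (auto simp: dvd_def)
      then have "y = e X + j * r" using le by (simp add: mult.commute)
      then show False using cl[OF eS[OF X(1)], of j] y by simp
    qed
    then have lt: "y < e X" by simp
    have "y div r < e X div r"
    proof (rule ccontr)
      assume "\<not> ?thesis"
      then have "e X div r * r \<le> y div r * r" by simp
      then have "e X \<le> y" using X(2) by (metis div_mult_mod_eq add_le_cancel_right)
      then show False using lt by simp
    qed
    moreover have "y = e X mod r + y div r * r" using X(2) by simp
    ultimately have "y \<in> C X" unfolding C_def by blast
    then show "y \<in> (\<Union>X<r. C X)" using X(1) by blast
  qed
  have fin: "finite (\<Union>X<r. C X)" unfolding C_def by auto
  have "card (UNIV - S) \<le> card (\<Union>X<r. C X)" using card_mono[OF fin sub] .
  also have "\<dots> \<le> (\<Sum>X<r. card (C X))" by (rule card_UN_le) simp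
  also have "\<dots> \<le> (\<Sum>X<r. e X div r)"
    by (rule sum_mono) (metis C_def card_image_le card_lessThan finite_lessThan)
  finally show ?thesis using finite_subset[OF sub fin] by simp
qed

lemma floor_sum:
  fixes a r :: nat
  assumes r0: "r > 0" and cop: "coprime r a"
  shows "2 * (\<Sum>X<r. a * X div r) \<le> (a - 1) * (r - 1)"
proof -
  define f where "f X = a * X div r" for X
  have pair: "f X + f (r - X) \<le> a - 1" if X: "X \<in> {1..<r}" for X
  proof -
    have "\<not> r dvd X" using X by (auto dest: dvd_imp_le)
    then have "\<not> r dvd a * X" using cop by (simp add: coprime_dvd_mult_right_iff)
    then have m0: "a * X mod r > 0" by (simp add: mod_eq_0_iff_dvd[symmetric]) 
    have e1: "f X * r + a * X mod r = a * X" unfolding f_def by (rule div_mult_mod_eq)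
    have e2: "f (r - X) * r + a * (r - X) mod r = a * (r - X)" unfolding f_def by (rule div_mult_mod_eq)
    have "a * X + a * (r - X) = a * r" using X by (simp add: diff_mult_distrib2)
    then have "(f X + f (r - X)) * r < a * r" using e1 e2 m0 by (simp add: add_mult_distrib)
    then have "f X + f (r - X) < a" by simp
    then show ?thesis by simp
  qed
  have s0: "(\<Sum>X<r. f X) = (\<Sum>X\<in>{1..<r}. f X)"
  proof -
    have "{..<r} = insert 0 {1..<r}" using r0 by auto
    then show ?thesis by (simp add: f_def)
  qed
  have s1: "(\<Sum>X\<in>{1..<r}. f (r - X)) = (\<Sum>X\<in>{1..<r}. f X)"
    by (rule sum.reindex_bij_witness[of _ "\<lambda>X. r - X" "\<lambda>X. r - X"]) auto
  have "2 * (\<Sum>X<r. f X) = (\<Sum>X\<in>{1..<r}. f X + f (r - X))"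
    unfolding s0 sum.distrib s1 by simp
  also have "\<dots> \<le> (\<Sum>X\<in>{1..<r}. a - 1)" by (rule sum_mono) (rule pair)
  also have "\<dots> = (a - 1) * (r - 1)" by simp
  finally show ?thesis unfolding f_def .
qed



lemma arith_key:
  fixes n p r a :: int
  assumes n: "n \<ge> 2" and p: "p \<ge> 1" and r: "r \<ge> 2 * n - 1" and a: "a \<ge> 1"
  shows "n * ((n - 1) * (p * r + 1) + a * (r - 1)) \<le> 2 * (n - 1) * (p * (n - 1) * r + a * (r - n + 1) + 1)"
proof -
  have id: "2 * (n - 1) * (p * (n - 1) * r + a * (r - n + 1) + 1) - n * ((n - 1) * (p * r + 1) + a * (r - 1))
      = (n - 1) * (n - 2) * (p * r - 1) + a * ((n - 2) * r - 2 * (n - 1)^2 + n)"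
    by (simp add: algebra_simps power2_eq_square)
  have "p * r \<ge> 1 * 1" using p r n by (intro mult_mono) auto
  then have t1: "(n - 1) * (n - 2) * (p * r - 1) \<ge> 0" using n by simp
  have "(n - 2) * r \<ge> (n - 2) * (2 * n - 1)" using n r by (intro mult_left_mono) auto
  then have "(n - 2) * r - 2 * (n - 1)^2 + n \<ge> 0" by (simp add: algebra_simps power2_eq_square)
  then have t2: "a * ((n - 2) * r - 2 * (n - 1)^2 + n) \<ge> 0" using a by simp
  show ?thesis using id t1 t2 by linarith
qed

theorem mainTheorem20:
  fixes a b n :: nat
  assumes "a > 0" and "b > 1" and "n > 1"
    and "gcd (rb b n) a = 1"
  shows "frob (S_abn a b n)
           \<le> int (emb_dim (S_abn a b n)) * int (n_small (S_abn a b n)) - 1"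
proof -
  have a: "a > 0" and b2: "b \<ge> 2" and n2: "n \<ge> 2" and cop: "gcd (rb b n) a = 1"
    using assms by auto
  define r where "r = rb b n"
  define S where "S = S_abn a b n"
  have rge: "r \<ge> 2 * n - 1" unfolding r_def by (rule rb_ge[OF b2])
  then have r0: "r > 0" using n2 by simp
  have copr: "coprime r a" using cop unfolding r_def by (simp add: coprime_iff_gcd_eq_1)
  define e where "e X = dc b (n - 1) X * r + a * X" for X
  have eS: "e X \<in> S" if "X < r" for X
  proof -
    have "n - 1 \<ge> 1" using n2 by simp
    then show ?thesis unfolding e_def S_def r_def using dc_mem[of "n - 1" X b n a] by blast
  qed
  have rS: "r \<in> S"
  proof -
    have "gen_a a b n 1 \<in> gen_a a b n ` {1..}" by simp
    then have "gen_a a b n 1 \<in> S" unfolding S_def S_abn_def by (rule gen_monoid.gen)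
    moreover have "gen_a a b n 1 = r" unfolding gen_a_def r_def by simp
    ultimately show ?thesis by simp
  qed
  have closed: "x + r \<in> S" if "x \<in> S" for x
    using gen_monoid.add[of x _ r] that rS unfolding S_def S_abn_def by simp
  have surj: "\<exists>X<r. e X mod r = t" if t: "t < r" for t
  proof -
    define f where "f X = a * X mod r" for X
    have inj: "inj_on f {..<r}"
    proof (rule inj_onI)
      fix X Y assume XY: "X \<in> {..<r}" "Y \<in> {..<r}" "f X = f Y"
      have "r dvd (max X Y - min X Y)"
      proof -
        have "a * max X Y mod r = a * min X Y mod r" using XY(3) unfolding f_def
          by (cases "X \<le> Y") (auto simp: max_def min_def)
        then have "r dvd a * max X Y - a * min X Y"
        proof -
          have "min X Y \<le> max X Y" by simp
          then have le: "a * min X Y \<le> a * max X Y" by (rule mult_le_mono2)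
          show ?thesis using mod_eq_dvd_iff_nat[OF le, of r] \<open>a * max X Y mod r = a * min X Y mod r\<close> by simp
        qed
        then have "r dvd a * (max X Y - min X Y)" by (simp add: diff_mult_distrib2)
        then show ?thesis using copr by (simp add: coprime_dvd_mult_right_iff)
      qed
      moreover have "max X Y - min X Y < r" using XY by auto
      ultimately have "max X Y - min X Y = 0" using nat_dvd_not_less by (metis neq0_conv)
      then show "X = Y" by (auto simp: max_def min_def split: if_splits)
    qed
    have "f ` {..<r} \<subseteq> {..<r}" unfolding f_def using r0 by auto
    then have "f ` {..<r} = {..<r}" using inj by (intro endo_inj_surj) auto
    then obtain X where X: "X < r" "f X = t" using t by (metis imageE lessThan_iff)
    have "e X mod r = f X" unfolding e_def f_def by simp
    then show ?thesis using X by auto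
  qed
  from gap_count[of r S e, OF r0 closed eS surj]
  have fing: "finite (UNIV - S)" and gle: "card (UNIV - S) \<le> (\<Sum>X<r. e X div r)" by auto
  have "(\<Sum>X<r. e X div r) = (\<Sum>X<r. dc b (n - 1) X) + (\<Sum>X<r. a * X div r)"
    unfolding e_def using r0 by (simp add: sum.distrib)
  moreover have "2 * (\<Sum>X<r. dc b (n - 1) X) = (n - 1) * b ^ n + r - 1"
    using dc_sum[OF b2, of "n - 1"] n2 unfolding r_def by simp
  moreover have "2 * (\<Sum>X<r. a * X div r) \<le> (a - 1) * (r - 1)" by (rule floor_sum[OF r0 copr])
  ultimately have g2: "2 * card (UNIV - S) \<le> (n - 1) * b ^ n + r - 1 + (a - 1) * (r - 1)"
    using gle by linarith
  define G where "G = (b - 1) * (n - 1) * r + a * (r - n + 1)"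
  have Ggap: "G \<in> UNIV - S" using gap[OF a b2 n2 cop] unfolding G_def S_def r_def by simp
  define F where "F = Max (UNIV - S)"
  have GF: "G \<le> F" unfolding F_def using Ggap fing by simp
  have FS: "F \<in> UNIV - S" unfolding F_def using Ggap fing by (intro Max_in) auto
  have frob: "frob S = int F" unfolding frob_def F_def using Ggap by auto
  have ns: "n_small S = card {s \<in> S. s < F}" unfolding n_small_def frob by simp
  have part: "{..F} = {s \<in> S. s < F} \<union> (UNIV - S)"
  proof
    show "{..F} \<subseteq> {s \<in> S. s < F} \<union> (UNIV - S)" using FS by (auto simp: le_less)
    show "{s \<in> S. s < F} \<union> (UNIV - S) \<subseteq> {..F}" unfolding F_def using fing by auto
  qed
  have "card {..F} = card {s \<in> S. s < F} + card (UNIV - S)"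
    unfolding part by (rule card_Un_disjoint) (use fing in auto)
  then have cnt: "card {s \<in> S. s < F} + card (UNIV - S) = F + 1" by simp
  have ed: "emb_dim S = n" unfolding S_def using emb_dim_eq[OF a b2 _ cop] n2 by simp
  have bn: "b ^ n = (b - 1) * r + 1" using rb_mul[of b n] b2 unfolding r_def by simp
  have ak: "int n * (int (n - 1) * (int (b - 1) * int r + 1) + int a * (int r - 1))
      \<le> 2 * (int n - 1) * (int (b - 1) * (int n - 1) * int r + int a * (int r - int n + 1) + 1)"
    using arith_key[of "int n" "int (b - 1)" "int r" "int a"] n2 b2 rge a by simp
  have "int (2 * card (UNIV - S)) \<le> int ((n - 1) * b ^ n + r - 1 + (a - 1) * (r - 1))"
    using g2 by linarith
  also have "\<dots> = int ((n - 1) * ((b - 1) * r + 1) + a * (r - 1))"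
  proof -
    have "r - 1 + (a - 1) * (r - 1) = (1 + (a - 1)) * (r - 1)" by (simp add: algebra_simps)
    also have "\<dots> = a * (r - 1)" using a by simp
    finally have "r - 1 + (a - 1) * (r - 1) = a * (r - 1)" .
    then have eq: "(n - 1) * ((b - 1) * r + 1) + r - 1 + (a - 1) * (r - 1) = (n - 1) * ((b - 1) * r + 1) + a * (r - 1)"
      using r0 by linarith
    show ?thesis by (simp only: bn eq)
  qed
  also have "\<dots> = int (n - 1) * (int (b - 1) * int r + 1) + int a * (int r - 1)"
  proof -
    have "int (r - 1) = int r - 1" using r0 by simp
    then show ?thesis by (simp only: of_nat_add of_nat_mult of_nat_1)
  qed
  finally have g3: "int n * (2 * int (card (UNIV - S))) \<le>
      int n * (int (n - 1) * (int (b - 1) * int r + 1) + int a * (int r - 1))"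
    using n2 by (intro mult_left_mono) auto
  have "int G = int (b - 1) * (int n - 1) * int r + int a * (int r - int n + 1)"
  proof -
    have h1: "int (n - 1) = int n - 1" "int (r - n) = int r - int n" using rge n2 by auto
    show ?thesis unfolding G_def by (simp only: of_nat_add of_nat_mult of_nat_1 h1)
  qed
  then have "2 * (int n - 1) * (int (b - 1) * (int n - 1) * int r + int a * (int r - int n + 1) + 1)
      \<le> 2 * (int n - 1) * (int F + 1)" using GF n2 by (intro mult_left_mono) auto
  then have key: "int n * int (card (UNIV - S)) \<le> (int n - 1) * (int F + 1)"
    using g3 ak by linarith
  have iN: "int (card {s \<in> S. s < F}) = int F + 1 - int (card (UNIV - S))" using cnt by simp
  have m1: "int n * int (card {s \<in> S. s < F}) = int n * (int F + 1) - int n * int (card (UNIV - S))"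
    unfolding iN by (simp add: algebra_simps)
  have m2: "(int n - 1) * (int F + 1) = int n * (int F + 1) - (int F + 1)" by (simp add: algebra_simps)
  have "int F + 1 \<le> int n * int (n_small S)"
    unfolding ns using m1 m2 key by linarith
  then show ?thesis unfolding S_def[symmetric] ed frob by linarith
qed

end
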